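(* If $G$ is a finite metacyclic group, then Ganea's homomorphism $H_1(G)\otimes Z(G)\rightarrow H_2(G)$ is an epimorphism.
   Context: A group $G$ is metacyclic if it has a normal cyclic subgroup $K$ with $G/K$ cyclic. $Z(G)$ is the center of $G$ and $H_i$ denotes integral homology. For the central subgroup $Z(G)$ there is Ganea's exact sequence $$H_1(G)\otimes Z(G)\to H_2(G)\to H_2(G/Z(G))\to Z(G)\to H_1(G)\to H_1(G/Z(G))\to 0,$$ and Ganea's homomorphism is its first map $H_1(G)\otimes Z(G)\to H_2(G)$. *)

theory Defs
  imports "HOL-Algebra.Algebra"
begin

definition group_center :: "('a, 'b) monoid_scheme \<Rightarrow> 'a set" where
  "group_center G = {z \<in> carrier G. \<forall>g \<in> carrier G. z \<otimes>\<^bsub>G\<^esub> g = g \<otimes>\<^bsub>G\<^esub> z}"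

definition metacyclic :: "('a, 'b) monoid_scheme \<Rightarrow> bool" where
  "metacyclic G \<longleftrightarrow> (\<exists>K. K \<lhd> G \<and> cyclic_group (subgroup_generated G K)
                          \<and> cyclic_group (G Mod K))"

text \<open>Chains of the (inhomogeneous, unnormalised) bar complex with integer
coefficients: C_n(G) is the free abelian group on n-tuples of group elements,
represented as integer-valued functions supported on (carrier G)^n.  Since the
groups considered are finite, all sums below are finite sums over carriers.\<close>

definition chains2 :: "('a, 'b) monoid_scheme \<Rightarrow> ('a \<times> 'a \<Rightarrow> int) set" where
  "chains2 G = {c. \<forall>p. c p \<noteq> 0 \<longrightarrow> p \<in> carrier G \<times> carrier G}"

definition chains3 :: "('a, 'b) monoid_scheme \<Rightarrow> ('a \<times> 'a \<times> 'a \<Rightarrow> int) set" where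
  "chains3 G = {c. \<forall>p. c p \<noteq> 0 \<longrightarrow> p \<in> carrier G \<times> carrier G \<times> carrier G}"

definition bd2 :: "('a, 'b) monoid_scheme \<Rightarrow> ('a \<times> 'a \<Rightarrow> int) \<Rightarrow> ('a \<Rightarrow> int)" where
  "bd2 G c = (\<lambda>x. \<Sum>p \<in> carrier G \<times> carrier G.
      c p * ((if snd p = x then 1 else 0) - (if fst p \<otimes>\<^bsub>G\<^esub> snd p = x then 1 else 0)
             + (if fst p = x then 1 else 0)))"

definition bd3 :: "('a, 'b) monoid_scheme \<Rightarrow> ('a \<times> 'a \<times> 'a \<Rightarrow> int) \<Rightarrow> ('a \<times> 'a \<Rightarrow> int)" where
  "bd3 G d = (\<lambda>q. \<Sum>p \<in> carrier G \<times> carrier G \<times> carrier G.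
      (case p of (a, b, e) \<Rightarrow>
        d p * ((if (b, e) = q then 1 else 0)
             - (if (a \<otimes>\<^bsub>G\<^esub> b, e) = q then 1 else 0)
             + (if (a, b \<otimes>\<^bsub>G\<^esub> e) = q then 1 else 0)
             - (if (a, b) = q then 1 else 0))))"

definition cycles2 :: "('a, 'b) monoid_scheme \<Rightarrow> ('a \<times> 'a \<Rightarrow> int) set" where
  "cycles2 G = {c \<in> chains2 G. bd2 G c = (\<lambda>_. 0)}"

definition boundaries2 :: "('a, 'b) monoid_scheme \<Rightarrow> ('a \<times> 'a \<Rightarrow> int) set" where
  "boundaries2 G = bd3 G ` chains3 G"

text \<open>H_2(G) = cycles2 G / boundaries2 G.  Ganea's map H_1(G) \<otimes> Z(G) \<rightarrow> H_2(G)
sends (class of g) \<otimes> z to the class of the cycle [g|z] - [z|g] (the image of the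
homology cross product [g] \<times> [z] under the multiplication G \<times> Z(G) \<rightarrow> G).\<close>

definition ganea_cycle :: "'a \<Rightarrow> 'a \<Rightarrow> ('a \<times> 'a \<Rightarrow> int)" where
  "ganea_cycle g z = (\<lambda>p. (if p = (g, z) then 1 else 0) - (if p = (z, g) then 1 else 0))"

text \<open>Since H_1(G) \<otimes> Z(G) is generated by the elementary tensors, Ganea's map is
onto iff every 2-cycle is homologous to an integral combination of the cycles
ganea_cycle g z with g in G and z central.\<close>

definition ganea_epi :: "('a, 'b) monoid_scheme \<Rightarrow> bool" where
  "ganea_epi G \<longleftrightarrow>
    (\<forall>c \<in> cycles2 G. \<exists>f :: 'a \<times> 'a \<Rightarrow> int. \<exists>b \<in> boundaries2 G.
       c = (\<lambda>q. (\<Sum>p \<in> carrier G \<times> group_center G. f p * ganea_cycle (fst p) (snd p) q) + b q))"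

end

theory Submission
  imports Defs
begin

definition ind :: "'x \<Rightarrow> ('x \<Rightarrow> int)" where
  "ind p = (\<lambda>q. if q = p then 1 else 0)"

definition WW :: "('a, 'b) monoid_scheme \<Rightarrow> ('a \<times> 'a \<Rightarrow> int) set" where
  "WW G = {c. \<exists>f. \<exists>bb \<in> boundaries2 G.
       c = (\<lambda>q. (\<Sum>p \<in> carrier G \<times> group_center G. f p * ganea_cycle (fst p) (snd p) q) + bb q)}"

lemma bd3_add: "bd3 G (\<lambda>p. d1 p + d2 p) = (\<lambda>q. bd3 G d1 q + bd3 G d2 q)"
  unfolding bd3_def by (simp add: split_def distrib_right sum.distrib)

lemma bd3_neg: "bd3 G (\<lambda>p. - d1 p) = (\<lambda>q. - bd3 G d1 q)"
  unfolding bd3_def by (simp add: split_def sum_negf)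

lemma bd3_zero: "bd3 G (\<lambda>p. 0) = (\<lambda>q. 0)"
  unfolding bd3_def by (auto simp: split_def)

lemma chains3_add: assumes "d1 \<in> chains3 G" "d2 \<in> chains3 G" shows "(\<lambda>p. d1 p + d2 p) \<in> chains3 G"
  unfolding chains3_def
proof (intro CollectI allI impI)
  fix p assume "d1 p + d2 p \<noteq> 0"
  then have "d1 p \<noteq> 0 \<or> d2 p \<noteq> 0" by auto
  then show "p \<in> carrier G \<times> carrier G \<times> carrier G" using assms unfolding chains3_def by blast
qed

lemma chains3_neg: "d1 \<in> chains3 G \<Longrightarrow> (\<lambda>p. - d1 p) \<in> chains3 G"
  unfolding chains3_def by auto

lemma bd_add: assumes "b1 \<in> boundaries2 G" "b2 \<in> boundaries2 G" shows "(\<lambda>q. b1 q + b2 q) \<in> boundaries2 G"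
proof -
  from assms(1) obtain d1 where d1: "d1 \<in> chains3 G" "b1 = bd3 G d1"
    unfolding boundaries2_def by (rule imageE) simp
  from assms(2) obtain d2 where d2: "d2 \<in> chains3 G" "b2 = bd3 G d2"
    unfolding boundaries2_def by (rule imageE) simp
  have eq: "(\<lambda>q. b1 q + b2 q) = bd3 G (\<lambda>p. d1 p + d2 p)" unfolding bd3_add d1(2) d2(2) ..
  show ?thesis unfolding eq boundaries2_def by (rule imageI, rule chains3_add) (rule d1, rule d2)
qed

lemma bd_neg: assumes "b1 \<in> boundaries2 G" shows "(\<lambda>q. - b1 q) \<in> boundaries2 G"
proof -
  from assms(1) obtain d1 where d1: "d1 \<in> chains3 G" "b1 = bd3 G d1"
    unfolding boundaries2_def by (rule imageE) simp
  have eq: "(\<lambda>q. - b1 q) = bd3 G (\<lambda>p. - d1 p)" by (simp only: bd3_neg d1(2))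
  show ?thesis unfolding eq boundaries2_def by (rule imageI, rule chains3_neg) (rule d1)
qed

lemma bd_zero: "(\<lambda>q. 0) \<in> boundaries2 G"
proof -
  have "(\<lambda>p. 0) \<in> chains3 G" unfolding chains3_def by simp
  then show ?thesis unfolding boundaries2_def bd3_zero[of G, symmetric] by (rule imageI)
qed

lemma WW_zero: "(\<lambda>q. 0) \<in> WW G"
  unfolding WW_def by (intro CollectI exI[of _ "\<lambda>p. 0"] bexI[of _ "\<lambda>q. 0"] bd_zero) simp

lemma WW_add: assumes "u \<in> WW G" "v \<in> WW G" shows "(\<lambda>q. u q + v q) \<in> WW G"
proof -
  obtain f1 b1 where 1: "b1 \<in> boundaries2 G" "u = (\<lambda>q. (\<Sum>p \<in> carrier G \<times> group_center G. f1 p * ganea_cycle (fst p) (snd p) q) + b1 q)"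
    using assms(1) unfolding WW_def by blast
  obtain f2 b2 where 2: "b2 \<in> boundaries2 G" "v = (\<lambda>q. (\<Sum>p \<in> carrier G \<times> group_center G. f2 p * ganea_cycle (fst p) (snd p) q) + b2 q)"
    using assms(2) unfolding WW_def by blast
  show ?thesis unfolding WW_def
    apply (rule CollectI, rule exI[of _ "\<lambda>p. f1 p + f2 p"], rule bexI[of _ "\<lambda>q. b1 q + b2 q"])
     apply (rule ext)
     apply (simp only: 1 2 distrib_right sum.distrib)
    using bd_add[OF 1(1) 2(1)] by simp
qed

lemma WW_neg: assumes "u \<in> WW G" shows "(\<lambda>q. - u q) \<in> WW G"
proof -
  obtain f1 b1 where 1: "b1 \<in> boundaries2 G" "u = (\<lambda>q. (\<Sum>p \<in> carrier G \<times> group_center G. f1 p * ganea_cycle (fst p) (snd p) q) + b1 q)"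
    using assms(1) unfolding WW_def by blast
  show ?thesis unfolding WW_def
    apply (rule CollectI, rule exI[of _ "\<lambda>p. - f1 p"], rule bexI[of _ "\<lambda>q. - b1 q"])
     apply (rule ext)
     apply (simp add: 1 sum_negf)
    using bd_neg[OF 1(1)] by simp
qed

lemma WW_diff: "u \<in> WW G \<Longrightarrow> v \<in> WW G \<Longrightarrow> (\<lambda>q. u q - v q) \<in> WW G"
  using WW_add[of u G "\<lambda>q. - v q"] WW_neg[of v G] by simp

lemma WW_bd: assumes "b \<in> boundaries2 G" shows "b \<in> WW G"
  unfolding WW_def
  by (rule CollectI, rule exI[of _ "\<lambda>p. 0"], rule bexI[of _ b]) (simp_all add: assms)

lemma center_sub: "group_center G \<subseteq> carrier G"
  unfolding group_center_def by blast

lemma WW_ganea: assumes "g \<in> carrier G" "z \<in> group_center G" "finite (carrier G)" shows "ganea_cycle g z \<in> WW G"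
proof -
  have fin: "finite (carrier G \<times> group_center G)"
    using assms(3) finite_subset[OF center_sub assms(3)] by (rule finite_SigmaI)
  have gz: "(g,z) \<in> carrier G \<times> group_center G" using assms by blast
  have "ganea_cycle g z = (\<lambda>q. (\<Sum>p \<in> carrier G \<times> group_center G. ind (g,z) p * ganea_cycle (fst p) (snd p) q) + (\<lambda>q. 0) q)"
  proof
    fix q
    have "(\<Sum>p \<in> carrier G \<times> group_center G. ind (g,z) p * ganea_cycle (fst p) (snd p) q)
        = (\<Sum>p \<in> carrier G \<times> group_center G. if p = (g,z) then ganea_cycle g z q else 0)"
      by (rule sum.cong) (simp_all add: ind_def)
    also have "\<dots> = ganea_cycle g z q"
      by (subst sum.delta[OF fin]) (simp only: gz if_True)
    finally show "ganea_cycle g z q = (\<Sum>p \<in> carrier G \<times> group_center G. ind (g,z) p * ganea_cycle (fst p) (snd p) q) + (\<lambda>q. 0) q" by simp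
  qed
  then show ?thesis unfolding WW_def
    by (intro CollectI exI[of _ "ind (g,z)"] bexI[of _ "\<lambda>q. 0"] bd_zero)
qed


lemma WW_eqI: "c \<in> WW G \<Longrightarrow> (\<And>q. f q = c q) \<Longrightarrow> f \<in> WW G"
  by (metis ext)

lemma WW_eqI_neg: "c \<in> WW G \<Longrightarrow> (\<And>q. f q = - c q) \<Longrightarrow> f \<in> WW G"
  using WW_neg by (metis ext)

lemma bd3_ind:
  assumes "x \<in> carrier G" "y \<in> carrier G" "z \<in> carrier G" and fin: "finite (carrier G)"
  shows "bd3 G (ind (x,y,z)) = (\<lambda>q. ind (y,z) q - ind (x \<otimes>\<^bsub>G\<^esub> y, z) q + ind (x, y \<otimes>\<^bsub>G\<^esub> z) q - ind (x,y) q)"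
proof
  fix q
  have "bd3 G (ind (x,y,z)) q = (\<Sum>p \<in> carrier G \<times> carrier G \<times> carrier G.
      if p = (x,y,z) then ((if (y, z) = q then 1 else 0)
             - (if (x \<otimes>\<^bsub>G\<^esub> y, z) = q then 1 else 0)
             + (if (x, y \<otimes>\<^bsub>G\<^esub> z) = q then 1 else 0)
             - (if (x, y) = q then 1 else 0)) else 0)"
    unfolding bd3_def by (rule sum.cong) (auto simp: ind_def)
  also have "\<dots> = (if (y, z) = q then 1 else 0)
             - (if (x \<otimes>\<^bsub>G\<^esub> y, z) = q then 1 else 0)
             + (if (x, y \<otimes>\<^bsub>G\<^esub> z) = q then 1 else 0)
             - (if (x, y) = q then 1 else 0)"
  proof -
    have fin3: "finite (carrier G \<times> carrier G \<times> carrier G)" using fin by simp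
    have mem: "(x,y,z) \<in> carrier G \<times> carrier G \<times> carrier G" using assms by blast
    show ?thesis by (subst sum.delta[OF fin3]) (simp only: mem if_True)
  qed
  also have "\<dots> = ind (y,z) q - ind (x \<otimes>\<^bsub>G\<^esub> y, z) q + ind (x, y \<otimes>\<^bsub>G\<^esub> z) q - ind (x,y) q"
    by (auto simp: ind_def)
  finally show "bd3 G (ind (x,y,z)) q = ind (y,z) q - ind (x \<otimes>\<^bsub>G\<^esub> y, z) q + ind (x, y \<otimes>\<^bsub>G\<^esub> z) q - ind (x,y) q" .
qed

lemma WW_cocycle:
  assumes "x \<in> carrier G" "y \<in> carrier G" "z \<in> carrier G" "finite (carrier G)"
  shows "(\<lambda>q. ind (y,z) q - ind (x \<otimes>\<^bsub>G\<^esub> y, z) q + ind (x, y \<otimes>\<^bsub>G\<^esub> z) q - ind (x,y) q) \<in> WW G"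
proof -
  have "ind (x,y,z) \<in> chains3 G" using assms(1-3) unfolding chains3_def ind_def by auto
  then have "bd3 G (ind (x,y,z)) \<in> WW G" by (intro WW_bd) (simp add: boundaries2_def)
  then show ?thesis using bd3_ind[OF assms] by simp
qed

definition cls :: "('a, 'b) monoid_scheme \<Rightarrow> ('a \<times> 'a \<Rightarrow> int) \<Rightarrow> ('a \<times> 'a \<Rightarrow> int) set" where
  "cls G u = {v. (\<lambda>q. v q - u q) \<in> WW G}"

definition crep :: "('x \<Rightarrow> int) set \<Rightarrow> ('x \<Rightarrow> int)" where
  "crep S = (SOME w. w \<in> S)"

lemma cls_self: "u \<in> cls G u"
  unfolding cls_def using WW_zero by simp

lemma cls_eq: "cls G u = cls G v \<longleftrightarrow> (\<lambda>q. u q - v q) \<in> WW G"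
proof
  assume "cls G u = cls G v"
  then have "u \<in> cls G v" using cls_self by metis
  then show "(\<lambda>q. u q - v q) \<in> WW G" unfolding cls_def by simp
next
  assume a: "(\<lambda>q. u q - v q) \<in> WW G"
  show "cls G u = cls G v"
  proof (rule Set.set_eqI)
    fix w
    have 1: "(\<lambda>q. w q - v q) \<in> WW G" if "(\<lambda>q. w q - u q) \<in> WW G"
      using WW_add[OF that a] by simp
    have 2: "(\<lambda>q. w q - u q) \<in> WW G" if "(\<lambda>q. w q - v q) \<in> WW G"
      using WW_diff[OF that a] by simp
    show "w \<in> cls G u \<longleftrightarrow> w \<in> cls G v" unfolding cls_def using 1 2 by blast
  qed
qed

lemma rep_cls: "(\<lambda>q. crep (cls G u) q - u q) \<in> WW G"
proof -
  have "crep (cls G u) \<in> cls G u" unfolding crep_def by (rule someI[of _ u]) (rule cls_self)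
  then show ?thesis unfolding cls_def by simp
qed

lemma cls_eqI: "(\<lambda>q. u q - v q) \<in> WW G \<Longrightarrow> cls G u = cls G v"
  using cls_eq by blast

lemma cls_rep: "cls G (crep (cls G u)) = cls G u"
  using rep_cls cls_eq by blast

definition EE :: "('a, 'b) monoid_scheme \<Rightarrow> (('a \<times> 'a \<Rightarrow> int) set \<times> 'a) monoid" where
  "EE G = \<lparr>carrier = {(cls G u, g) | u g. g \<in> carrier G},
           monoid.mult = (\<lambda>x y. (cls G (\<lambda>q. crep (fst x) q + crep (fst y) q + ind (snd x, snd y) q), snd x \<otimes>\<^bsub>G\<^esub> snd y)),
           one = (cls G (\<lambda>q. - ind (\<one>\<^bsub>G\<^esub>, \<one>\<^bsub>G\<^esub>) q), \<one>\<^bsub>G\<^esub>)\<rparr>"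

lemma EE_carrier: "(cls G u, g) \<in> carrier (EE G) \<longleftrightarrow> g \<in> carrier G"
  unfolding EE_def by auto

lemma EE_carrierE: "x \<in> carrier (EE G) \<Longrightarrow> (\<And>u g. x = (cls G u, g) \<Longrightarrow> g \<in> carrier G \<Longrightarrow> P) \<Longrightarrow> P"
  unfolding EE_def by auto

lemma EE_mult: "(cls G u, g) \<otimes>\<^bsub>EE G\<^esub> (cls G v, h) = (cls G (\<lambda>q. u q + v q + ind (g, h) q), g \<otimes>\<^bsub>G\<^esub> h)"
proof -
  have "(\<lambda>q. (crep (cls G u) q + crep (cls G v) q + ind (g, h) q) - (u q + v q + ind (g, h) q)) \<in> WW G"
    using WW_add[OF rep_cls[of G u] rep_cls[of G v]] by (simp add: algebra_simps)
  then show ?thesis unfolding EE_def by (simp add: cls_eq)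
qed

lemma EE_one: "\<one>\<^bsub>EE G\<^esub> = (cls G (\<lambda>q. - ind (\<one>\<^bsub>G\<^esub>, \<one>\<^bsub>G\<^esub>) q), \<one>\<^bsub>G\<^esub>)"
  unfolding EE_def by simp

locale fgrp = group G for G :: "('a, 'b) monoid_scheme" (structure) +
  assumes fin: "finite (carrier G)"
begin

lemma cocyc: "x \<in> carrier G \<Longrightarrow> y \<in> carrier G \<Longrightarrow> z \<in> carrier G \<Longrightarrow>
   (\<lambda>q. ind (y,z) q - ind (x \<otimes> y, z) q + ind (x, y \<otimes> z) q - ind (x,y) q) \<in> WW G"
  by (rule WW_cocycle[OF _ _ _ fin])

lemma one_left: "g \<in> carrier G \<Longrightarrow> (\<lambda>q. ind (\<one>, g) q - ind (\<one>, \<one>) q) \<in> WW G"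
  using cocyc[of \<one> \<one> g] by simp

lemma one_right: "g \<in> carrier G \<Longrightarrow> (\<lambda>q. ind (g, \<one>) q - ind (\<one>, \<one>) q) \<in> WW G"
  using WW_neg[OF cocyc[of g \<one> \<one>]] by simp

lemma EE_closed: "x \<in> carrier (EE G) \<Longrightarrow> y \<in> carrier (EE G) \<Longrightarrow> x \<otimes>\<^bsub>EE G\<^esub> y \<in> carrier (EE G)"
    by (elim EE_carrierE) (simp add: EE_mult EE_carrier)

lemma EE_one_closed: "\<one>\<^bsub>EE G\<^esub> \<in> carrier (EE G)" by (simp add: EE_one EE_carrier)

lemma EE_assoc: "x \<in> carrier (EE G) \<Longrightarrow> y \<in> carrier (EE G) \<Longrightarrow> z \<in> carrier (EE G) \<Longrightarrow>
    x \<otimes>\<^bsub>EE G\<^esub> y \<otimes>\<^bsub>EE G\<^esub> z = x \<otimes>\<^bsub>EE G\<^esub> (y \<otimes>\<^bsub>EE G\<^esub> z)"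
  proof (elim EE_carrierE)
    fix u g v h w k assume *: "x = (cls G u, g)" "y = (cls G v, h)" "z = (cls G w, k)"
      "g \<in> carrier G" "h \<in> carrier G" "k \<in> carrier G"
    have "(\<lambda>q. (u q + v q + ind (g, h) q + w q + ind (g \<otimes> h, k) q) - (u q + (v q + w q + ind (h, k) q) + ind (g, h \<otimes> k) q)) \<in> WW G"
      by (rule WW_eqI_neg[OF cocyc[OF *(4-6)]]) (simp add: algebra_simps)
    then have "cls G (\<lambda>q. u q + v q + ind (g, h) q + w q + ind (g \<otimes> h, k) q) = cls G (\<lambda>q. u q + (v q + w q + ind (h, k) q) + ind (g, h \<otimes> k) q)"
      by (rule cls_eqI)
    then show ?thesis unfolding *(1-3) EE_mult using *(4-6) by (simp add: m_assoc)
  qed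

lemma EE_lone: "x \<in> carrier (EE G) \<Longrightarrow> \<one>\<^bsub>EE G\<^esub> \<otimes>\<^bsub>EE G\<^esub> x = x"
  proof (elim EE_carrierE)
    fix u g assume *: "x = (cls G u, g)" "g \<in> carrier G"
    have "(\<lambda>q. (- ind (\<one>, \<one>) q + u q + ind (\<one>, g) q) - u q) \<in> WW G"
      by (rule WW_eqI[OF one_left[OF *(2)]]) (simp add: algebra_simps)
    then have "cls G (\<lambda>q. - ind (\<one>, \<one>) q + u q + ind (\<one>, g) q) = cls G u" by (rule cls_eqI)
    then show ?thesis unfolding *(1) EE_mult EE_one using *(2) by simp
  qed

lemma EE_linv: "x \<in> carrier (EE G) \<Longrightarrow> \<exists>y\<in>carrier (EE G). y \<otimes>\<^bsub>EE G\<^esub> x = \<one>\<^bsub>EE G\<^esub>"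
  proof (elim EE_carrierE)
    fix u g assume *: "x = (cls G u, g)" "g \<in> carrier G"
    let ?y = "(cls G (\<lambda>q. - u q - ind (inv g, g) q - ind (\<one>, \<one>) q), inv g)"
    have eq: "(\<lambda>q. - u q - ind (inv g, g) q - ind (\<one>, \<one>) q + u q + ind (inv g, g) q) = (\<lambda>q. - ind (\<one>,\<one>) q)"
      by (rule ext) simp
    have "?y \<otimes>\<^bsub>EE G\<^esub> x = \<one>\<^bsub>EE G\<^esub>"
      unfolding *(1) EE_mult EE_one eq using *(2) by simp
    moreover have "?y \<in> carrier (EE G)" using * by (simp add: EE_carrier)
    ultimately show ?thesis by blast
  qed

lemma EE_group: "group (EE G)"
  by (rule groupI) (auto intro: EE_closed EE_one_closed EE_assoc EE_lone EE_linv)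

end

context fgrp
begin

lemma int_pow_natE:
  assumes x: "x \<in> carrier G" obtains m :: nat where "x [^] (n::int) = x [^] m"
proof -
  define N where "N = int (order G)"
  have N1: "x [^] N = \<one>" unfolding N_def int_pow_int using pow_order_eq_1[OF x] .
  have "n = n mod N + N * (n div N)" by simp
  then have "x [^] n = x [^] (n mod N) \<otimes> (x [^] N) [^] (n div N)"
    by (metis int_pow_mult int_pow_pow x)
  also have "\<dots> = x [^] (n mod N)" using N1 x by simp
  also have "\<dots> = x [^] (nat (n mod N))"
  proof -
    have "order G > 0" using fin order_gt_0_iff_finite by blast
    then have "n mod N \<ge> 0" unfolding N_def by simp
    then show ?thesis by (metis int_nat_eq int_pow_int)
  qed
  finally show ?thesis using that by blast
qed

lemma metacyclic_gens:
  assumes "metacyclic G"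
  obtains a b r where "a \<in> carrier G" "b \<in> carrier G" "b \<otimes> a \<otimes> inv b = a [^] (r::nat)"
    "\<And>g. g \<in> carrier G \<Longrightarrow> \<exists>(i::nat) (j::nat). g = a [^] i \<otimes> b [^] j"
proof -
  obtain K where K: "K \<lhd> G" "cyclic_group (subgroup_generated G K)" "cyclic_group (G Mod K)"
    using assms unfolding metacyclic_def by blast
  interpret N: normal K G by (rule K(1))
  have sgK: "subgroup K G" by (rule N.subgroup_axioms)
  have cK: "carrier (subgroup_generated G K) = K" using sgK by simp
  interpret SG: group "subgroup_generated G K" by simp
  have "\<exists>x\<in>carrier (subgroup_generated G K). carrier (subgroup_generated G K) = range (\<lambda>n::int. x [^]\<^bsub>subgroup_generated G K\<^esub> n)"
    using K(2) SG.cyclic_group by blast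
  then obtain a where a0: "a \<in> carrier (subgroup_generated G K)" "carrier (subgroup_generated G K) = range (\<lambda>n::int. a [^]\<^bsub>subgroup_generated G K\<^esub> n)"
    by (rule bexE)
  have a: "a \<in> K" "K = range (\<lambda>n::int. a [^]\<^bsub>subgroup_generated G K\<^esub> n)"
    using a0(1) apply (simp only: cK)
    by (rule trans[OF sym[OF cK] a0(2)])
  have aG: "a \<in> carrier G" by (rule subgroup.mem_carrier[OF sgK a(1)])
  have Ka: "K = range (\<lambda>n::int. a [^] n)"
  proof -
    have "\<And>n::int. a [^]\<^bsub>subgroup_generated G K\<^esub> n = a [^] n"
      using int_pow_subgroup_generated[of a K] a0(1) by blast
    then show ?thesis using a(2) by (simp only:)
  qed
  have Kn: "\<exists>i::nat. k = a [^] i" if "k \<in> K" for k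
  proof -
    have "k \<in> range (\<lambda>n::int. a [^] n)" using that Ka by (simp only:)
    then obtain n::int where "k = a [^] n" by (rule rangeE)
    then show ?thesis using int_pow_natE[OF aG, of n] by metis
  qed
  interpret Q: group "G Mod K" by (rule N.factorgroup_is_group)
  obtain Xc where Xc: "Xc \<in> carrier (G Mod K)" "carrier (G Mod K) = range (\<lambda>n::int. Xc [^]\<^bsub>G Mod K\<^esub> n)"
    using K(3) Q.cyclic_group by blast
  obtain b where b: "b \<in> carrier G" "Xc = K #> b"
    using Xc(1) unfolding carrier_FactGroup by auto
  have hom: "(\<lambda>x. K #> x) \<in> hom G (G Mod K)" by (rule N.r_coset_hom_Mod)
  have dec: "\<exists>(i::nat) (j::nat). g = a [^] i \<otimes> b [^] j" if g: "g \<in> carrier G" for g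
  proof -
    have "K #> g \<in> carrier (G Mod K)" unfolding carrier_FactGroup using g by auto
    then obtain n::int where "K #> g = Xc [^]\<^bsub>G Mod K\<^esub> n" using Xc(2) by auto
    also have "\<dots> = K #> (b [^] n)" unfolding b(2)
      using hom_int_pow[OF hom b(1) is_group Q.is_group] by simp
    finally have eq: "K #> g = K #> (b [^] n)" .
    obtain j::nat where j: "b [^] n = b [^] j" using int_pow_natE[OF b(1)] by blast
    have "g \<in> K #> (b [^] j)" using rcos_self[OF g sgK] eq j by simp
    then obtain k where k: "k \<in> K" "g = k \<otimes> b [^] j" unfolding r_coset_def by auto
    obtain i::nat where "k = a [^] i" using Kn[OF k(1)] by blast
    then have "g = a [^] i \<otimes> b [^] j" using k(2) by (simp only:)
    then show ?thesis by (intro exI)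
  qed
  have "b \<otimes> a \<otimes> inv b \<in> K" by (rule N.inv_op_closed2[OF b(1) a(1)])
  then obtain r::nat where "b \<otimes> a \<otimes> inv b = a [^] r" using Kn by blast
  then show ?thesis using that[OF aG b(1)] dec by blast
qed

end

context fgrp
begin

sublocale E: group "EE G" by (rule EE_group)

lemma snd_mult: "x \<in> carrier (EE G) \<Longrightarrow> y \<in> carrier (EE G) \<Longrightarrow> snd (x \<otimes>\<^bsub>EE G\<^esub> y) = snd x \<otimes> snd y"
  by (elim EE_carrierE) (simp add: EE_mult)

lemma snd_carrier: "x \<in> carrier (EE G) \<Longrightarrow> snd x \<in> carrier G"
  by (elim EE_carrierE) simp

lemma snd_hom: "snd \<in> hom (EE G) G"
  by (rule homI) (auto simp: snd_mult snd_carrier)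

lemma snd_inv: "x \<in> carrier (EE G) \<Longrightarrow> snd (inv\<^bsub>EE G\<^esub> x) = inv (snd x)"
  using group_hom.hom_inv[of "EE G" G snd] snd_hom EE_group is_group
  by (simp add: group_hom_axioms_def group_hom_def)

lemma snd_one: "snd \<one>\<^bsub>EE G\<^esub> = \<one>"
  by (simp add: EE_one)

lemma snd_ipow: "x \<in> carrier (EE G) \<Longrightarrow> snd (x [^]\<^bsub>EE G\<^esub> (n::int)) = snd x [^] n"
  using hom_int_pow[OF snd_hom _ EE_group is_group] by blast

lemma snd_npow: "x \<in> carrier (EE G) \<Longrightarrow> snd (x [^]\<^bsub>EE G\<^esub> (n::nat)) = snd x [^] n"
  using snd_ipow[of x "int n"] by (simp add: int_pow_int)

definition Ahat where "Ahat = {x \<in> carrier (EE G). snd x = \<one>}"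

lemma ganea_ind: "ganea_cycle g z = (\<lambda>q. ind (g,z) q - ind (z,g) q)"
  unfolding ganea_cycle_def ind_def by (rule ext) (auto)

lemma comm_lift:
  assumes x: "x \<in> carrier (EE G)" and y: "y \<in> carrier (EE G)" and z: "snd x \<in> group_center G"
  shows "x \<otimes>\<^bsub>EE G\<^esub> y = y \<otimes>\<^bsub>EE G\<^esub> x"
  using x y
proof (elim EE_carrierE)
  fix u c v g assume *: "x = (cls G u, c)" "c \<in> carrier G" "y = (cls G v, g)" "g \<in> carrier G"
  have zc: "c \<in> group_center G" using z *(1) by simp
  have cg: "c \<otimes> g = g \<otimes> c" using zc *(4) unfolding group_center_def by blast
  have "(\<lambda>q. (u q + v q + ind (c, g) q) - (v q + u q + ind (g, c) q)) \<in> WW G"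
    by (rule WW_eqI_neg[OF WW_ganea[OF *(4) zc fin]]) (simp add: ganea_ind)
  then have "cls G (\<lambda>q. u q + v q + ind (c, g) q) = cls G (\<lambda>q. v q + u q + ind (g, c) q)" by (rule cls_eqI)
  then show ?thesis unfolding *(1,3) EE_mult using cg by simp
qed

lemma one_center: "\<one> \<in> group_center G"
  unfolding group_center_def by simp

lemma Ahat_central: "x \<in> Ahat \<Longrightarrow> y \<in> carrier (EE G) \<Longrightarrow> x \<otimes>\<^bsub>EE G\<^esub> y = y \<otimes>\<^bsub>EE G\<^esub> x"
  unfolding Ahat_def by (rule comm_lift) (use one_center in auto)

lemma same_snd:
  assumes "x \<in> carrier (EE G)" "y \<in> carrier (EE G)" "snd x = snd y"
  shows "x \<otimes>\<^bsub>EE G\<^esub> inv\<^bsub>EE G\<^esub> y \<in> Ahat"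
  unfolding Ahat_def using assms
  by (simp add: snd_mult snd_inv snd_carrier)

end

context group
begin

lemma inv_cancel_l [simp]: "x \<in> carrier G \<Longrightarrow> w \<in> carrier G \<Longrightarrow> inv x \<otimes> (x \<otimes> w) = w"
  by (simp add: m_assoc[symmetric])

lemma inv_cancel_r [simp]: "x \<in> carrier G \<Longrightarrow> w \<in> carrier G \<Longrightarrow> x \<otimes> (inv x \<otimes> w) = w"
  by (simp add: m_assoc[symmetric])

lemma comm_inv: "x \<in> carrier G \<Longrightarrow> y \<in> carrier G \<Longrightarrow> x \<otimes> y = y \<otimes> x \<Longrightarrow> x \<otimes> inv y = inv y \<otimes> x"
  by (metis inv_closed inv_solve_left inv_solve_right m_assoc m_closed)

lemma comm_mult: "x \<in> carrier G \<Longrightarrow> y \<in> carrier G \<Longrightarrow> z \<in> carrier G \<Longrightarrow>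
   x \<otimes> y = y \<otimes> x \<Longrightarrow> x \<otimes> z = z \<otimes> x \<Longrightarrow> x \<otimes> (y \<otimes> z) = (y \<otimes> z) \<otimes> x"
  by (metis m_assoc)

lemma comm_npow: "x \<in> carrier G \<Longrightarrow> y \<in> carrier G \<Longrightarrow> x \<otimes> y = y \<otimes> x \<Longrightarrow> x \<otimes> y [^] (n::nat) = y [^] n \<otimes> x"
  using group_commutes_pow[of y x n] by simp

lemma comm_ipow: "x \<in> carrier G \<Longrightarrow> y \<in> carrier G \<Longrightarrow> x \<otimes> y = y \<otimes> x \<Longrightarrow> x \<otimes> y [^] (n::int) = y [^] n \<otimes> x"
proof (cases n rule: int_cases)
  case (nonneg m)
  assume "x \<in> carrier G" "y \<in> carrier G" "x \<otimes> y = y \<otimes> x"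
  then show ?thesis using comm_npow[of x y m] nonneg by (simp add: int_pow_int)
next
  case (neg m)
  assume a: "x \<in> carrier G" "y \<in> carrier G" "x \<otimes> y = y \<otimes> x"
  then have "x \<otimes> y [^] Suc m = y [^] Suc m \<otimes> x" using comm_npow by blast
  then have "x \<otimes> inv (y [^] Suc m) = inv (y [^] Suc m) \<otimes> x" using comm_inv a by simp
  then show ?thesis using neg a by (simp add: int_pow_neg_int del: of_nat_Suc)
qed

lemma conj_npow: "x \<in> carrier G \<Longrightarrow> y \<in> carrier G \<Longrightarrow> x \<otimes> y [^] (n::nat) \<otimes> inv x = (x \<otimes> y \<otimes> inv x) [^] n"
proof (induction n)
  case 0 then show ?case by simp
next
  case (Suc n)
  have "(x \<otimes> y [^] n \<otimes> inv x) \<otimes> (x \<otimes> y \<otimes> inv x) = x \<otimes> y [^] n \<otimes> (inv x \<otimes> x) \<otimes> y \<otimes> inv x"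
    using Suc.prems by (simp add: m_assoc)
  also have "\<dots> = x \<otimes> y [^] Suc n \<otimes> inv x"
    using Suc.prems by (simp add: m_assoc)
  finally have "x \<otimes> y [^] Suc n \<otimes> inv x = (x \<otimes> y [^] n \<otimes> inv x) \<otimes> (x \<otimes> y \<otimes> inv x)" by simp
  then show ?case using Suc by simp
qed

lemma conj_ipow: "x \<in> carrier G \<Longrightarrow> y \<in> carrier G \<Longrightarrow> x \<otimes> y [^] (n::int) \<otimes> inv x = (x \<otimes> y \<otimes> inv x) [^] n"
proof (cases n rule: int_cases)
  case (nonneg m)
  assume "x \<in> carrier G" "y \<in> carrier G"
  then show ?thesis using conj_npow[of x y m] nonneg by (simp add: int_pow_int)
next
  case (neg m)
  assume a: "x \<in> carrier G" "y \<in> carrier G"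
  have "x \<otimes> inv (y [^] Suc m) \<otimes> inv x = inv (x \<otimes> y [^] Suc m \<otimes> inv x)"
    using a by (simp add: inv_mult_group m_assoc)
  then show ?thesis using neg a conj_npow[of x y "Suc m"] by (simp add: int_pow_neg_int del: of_nat_Suc)
qed

definition cm where "cm x y = x \<otimes> y \<otimes> inv x \<otimes> inv y"

lemma cm_closed: "x \<in> carrier G \<Longrightarrow> y \<in> carrier G \<Longrightarrow> cm x y \<in> carrier G"
  unfolding cm_def by simp

lemma cm_mult: "x \<in> carrier G \<Longrightarrow> u \<in> carrier G \<Longrightarrow> y \<in> carrier G \<Longrightarrow>
   cm (x \<otimes> u) y = x \<otimes> cm u y \<otimes> inv x \<otimes> cm x y"
  unfolding cm_def by (simp add: m_assoc inv_mult_group)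

lemma cm_conj: "x \<in> carrier G \<Longrightarrow> y \<in> carrier G \<Longrightarrow>
   y \<otimes> cm x y \<otimes> inv y = cm (y \<otimes> x \<otimes> inv y) y"
  unfolding cm_def by (simp add: m_assoc inv_mult_group)

lemma cm_one_iff: "x \<in> carrier G \<Longrightarrow> y \<in> carrier G \<Longrightarrow> cm x y = \<one> \<longleftrightarrow> x \<otimes> y = y \<otimes> x"
proof -
  assume x: "x \<in> carrier G" and y: "y \<in> carrier G"
  have e: "cm x y = (x \<otimes> y) \<otimes> inv (y \<otimes> x)" using x y by (simp add: cm_def inv_mult_group m_assoc)
  have "u \<otimes> inv v = \<one> \<longleftrightarrow> u = v" if "u \<in> carrier G" "v \<in> carrier G" for u v
  proof
    assume "u \<otimes> inv v = \<one>"
    then have "(u \<otimes> inv v) \<otimes> v = v" using that by simp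
    then show "u = v" using that by (simp add: m_assoc)
  qed (use that in simp)
  then show ?thesis using e x y by simp
qed

end

locale mcg = fgrp +
  fixes a b and r :: nat
  assumes aC: "a \<in> carrier G" and bC: "b \<in> carrier G" and conj: "b \<otimes> a \<otimes> inv b = a [^] r"
    and dec: "\<And>g. g \<in> carrier G \<Longrightarrow> \<exists>(i::nat) (j::nat). g = a [^] i \<otimes> b [^] j"
begin

abbreviation emult (infixl "\<odot>" 70) where "x \<odot> y \<equiv> x \<otimes>\<^bsub>EE G\<^esub> y"
abbreviation einv where "einv x \<equiv> inv\<^bsub>EE G\<^esub> x"
abbreviation EC where "EC \<equiv> carrier (EE G)"

definition ah where "ah = (cls G (\<lambda>q. 0), a)"
definition bh where "bh = (cls G (\<lambda>q. 0), b)"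

lemma ah_C [simp]: "ah \<in> EC" unfolding ah_def using aC by (simp add: EE_carrier)
lemma bh_C [simp]: "bh \<in> EC" unfolding bh_def using bC by (simp add: EE_carrier)
lemma snd_ah [simp]: "snd ah = a" unfolding ah_def by simp
lemma snd_bh [simp]: "snd bh = b" unfolding bh_def by simp

lemma Ahat_sub: "x \<in> Ahat \<Longrightarrow> x \<in> EC" unfolding Ahat_def by simp

lemma Ahat_inv: "x \<in> Ahat \<Longrightarrow> einv x \<in> Ahat"
  unfolding Ahat_def by (simp add: snd_inv)

lemma dec_E: assumes x: "x \<in> EC" shows "\<exists>\<beta>\<in>Ahat. \<exists>(i::nat) (j::nat). x = \<beta> \<odot> (ah [^]\<^bsub>EE G\<^esub> i \<odot> bh [^]\<^bsub>EE G\<^esub> j)"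
proof -
  obtain i j :: nat where ij: "snd x = a [^] i \<otimes> b [^] j" using dec[OF snd_carrier[OF x]] by blast
  define y where "y = ah [^]\<^bsub>EE G\<^esub> i \<odot> bh [^]\<^bsub>EE G\<^esub> j"
  have yC: "y \<in> EC" unfolding y_def by simp
  have "snd y = snd x" unfolding y_def ij by (simp add: snd_mult snd_npow)
  then have \<beta>: "x \<odot> einv y \<in> Ahat" using same_snd[OF x yC] by simp
  have "x = (x \<odot> einv y) \<odot> y" using x yC by (simp add: E.m_assoc)
  then show ?thesis using \<beta> unfolding y_def by blast
qed

lemma alpha0: "\<exists>\<alpha>\<in>Ahat. bh \<odot> ah \<odot> einv bh = \<alpha> \<odot> ah [^]\<^bsub>EE G\<^esub> r"
proof -
  have "snd (bh \<odot> ah \<odot> einv bh) = snd (ah [^]\<^bsub>EE G\<^esub> r)"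
    by (simp add: snd_mult snd_inv snd_npow conj)
  then have "(bh \<odot> ah \<odot> einv bh) \<odot> einv (ah [^]\<^bsub>EE G\<^esub> r) \<in> Ahat"
    by (intro same_snd) simp_all
  moreover have "bh \<odot> ah \<odot> einv bh = ((bh \<odot> ah \<odot> einv bh) \<odot> einv (ah [^]\<^bsub>EE G\<^esub> r)) \<odot> ah [^]\<^bsub>EE G\<^esub> r"
    by (simp add: E.m_assoc)
  ultimately show ?thesis by blast
qed

definition d where "d = E.cm ah bh"

lemma d_C [simp]: "d \<in> EC" unfolding d_def by (simp add: E.cm_closed)

lemma d_comm_ah: "ah \<odot> d = d \<odot> ah"
proof -
  obtain \<alpha> where \<alpha>: "\<alpha> \<in> Ahat" "bh \<odot> ah \<odot> einv bh = \<alpha> \<odot> ah [^]\<^bsub>EE G\<^esub> r" using alpha0 by blast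
  have aC': "\<alpha> \<in> EC" using Ahat_sub \<alpha>(1) by blast
  have w: "bh \<odot> einv ah \<odot> einv bh = einv (\<alpha> \<odot> ah [^]\<^bsub>EE G\<^esub> r)"
    unfolding \<alpha>(2)[symmetric] by (simp add: E.inv_mult_group E.m_assoc)
  have c1: "ah \<odot> \<alpha> = \<alpha> \<odot> ah" using Ahat_central[OF \<alpha>(1) ah_C] by simp
  have c2: "ah \<odot> ah [^]\<^bsub>EE G\<^esub> r = ah [^]\<^bsub>EE G\<^esub> r \<odot> ah" by (rule E.comm_npow) simp_all
  have c3: "ah \<odot> (\<alpha> \<odot> ah [^]\<^bsub>EE G\<^esub> r) = (\<alpha> \<odot> ah [^]\<^bsub>EE G\<^esub> r) \<odot> ah"
    by (rule E.comm_mult) (simp_all add: aC' c1 c2)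
  have c4: "ah \<odot> einv (\<alpha> \<odot> ah [^]\<^bsub>EE G\<^esub> r) = einv (\<alpha> \<odot> ah [^]\<^bsub>EE G\<^esub> r) \<odot> ah"
    by (rule E.comm_inv) (simp_all add: aC' c3)
  have dd: "d = ah \<odot> einv (\<alpha> \<odot> ah [^]\<^bsub>EE G\<^esub> r)"
    unfolding d_def E.cm_def w[symmetric] by (simp add: E.m_assoc)
  have wC: "einv (\<alpha> \<odot> ah [^]\<^bsub>EE G\<^esub> r) \<in> EC" using aC' by simp
  show ?thesis unfolding dd using wC by (simp add: E.m_assoc c4[symmetric])
qed

lemma cm_pow: "E.cm (ah [^]\<^bsub>EE G\<^esub> (k::nat)) bh = d [^]\<^bsub>EE G\<^esub> k"
proof (induction k)
  case 0 then show ?case by (simp add: E.cm_def)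
next
  case (Suc k)
  have "E.cm (ah [^]\<^bsub>EE G\<^esub> Suc k) bh = E.cm (ah \<odot> ah [^]\<^bsub>EE G\<^esub> k) bh"
    by (subst E.nat_pow_Suc2) simp_all
  also have "\<dots> = ah \<odot> d [^]\<^bsub>EE G\<^esub> k \<odot> einv ah \<odot> d"
    using E.cm_mult[of ah "ah [^]\<^bsub>EE G\<^esub> k" bh] Suc d_def by simp
  also have "\<dots> = d [^]\<^bsub>EE G\<^esub> k \<odot> d"
  proof -
    have "ah \<odot> d [^]\<^bsub>EE G\<^esub> k = d [^]\<^bsub>EE G\<^esub> k \<odot> ah" by (rule E.comm_npow) (simp_all add: d_comm_ah)
    then show ?thesis by (simp add: E.m_assoc)
  qed
  also have "\<dots> = d [^]\<^bsub>EE G\<^esub> Suc k" by (simp add: E.nat_pow_Suc)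
  finally show ?case .
qed

end

context mcg
begin

lemma snd_cm: "x \<in> EC \<Longrightarrow> y \<in> EC \<Longrightarrow> snd (E.cm x y) = cm (snd x) (snd y)"
  unfolding E.cm_def cm_def by (simp add: snd_mult snd_inv snd_carrier)

lemma a_center: assumes "a [^] (k::nat) \<otimes> b = b \<otimes> a [^] k" shows "a [^] k \<in> group_center G"
  unfolding group_center_def
proof (intro CollectI conjI ballI)
  show "a [^] k \<in> carrier G" using aC by simp
  fix g assume g: "g \<in> carrier G"
  obtain i j :: nat where ij: "g = a [^] i \<otimes> b [^] j" using dec[OF g] by blast
  have 1: "a [^] k \<otimes> a [^] i = a [^] i \<otimes> a [^] k" using aC by (simp add: nat_pow_mult add.commute)
  have 2: "a [^] k \<otimes> b [^] j = b [^] j \<otimes> a [^] k" by (rule comm_npow) (simp_all add: aC bC assms)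
  show "a [^] k \<otimes> g = g \<otimes> a [^] k" unfolding ij by (rule comm_mult) (simp_all add: aC bC 1 2)
qed

lemma dk_triv_nat: assumes "d [^]\<^bsub>EE G\<^esub> (k::nat) \<in> Ahat" shows "d [^]\<^bsub>EE G\<^esub> k = \<one>\<^bsub>EE G\<^esub>"
proof -
  have "snd (E.cm (ah [^]\<^bsub>EE G\<^esub> k) bh) = \<one>" using assms unfolding cm_pow Ahat_def by simp
  then have "cm (a [^] k) b = \<one>" by (simp add: snd_cm snd_npow)
  then have "a [^] k \<otimes> b = b \<otimes> a [^] k" using cm_one_iff aC bC by simp
  then have z: "a [^] k \<in> group_center G" by (rule a_center)
  have "ah [^]\<^bsub>EE G\<^esub> k \<odot> bh = bh \<odot> ah [^]\<^bsub>EE G\<^esub> k"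
    by (rule comm_lift) (simp_all add: snd_npow z)
  then have "E.cm (ah [^]\<^bsub>EE G\<^esub> k) bh = \<one>\<^bsub>EE G\<^esub>" using E.cm_one_iff by simp
  then show ?thesis unfolding cm_pow .
qed

lemma dk_triv: assumes "d [^]\<^bsub>EE G\<^esub> (k::int) \<in> Ahat" shows "d [^]\<^bsub>EE G\<^esub> k = \<one>\<^bsub>EE G\<^esub>"
proof (cases k rule: int_cases)
  case (nonneg m)
  then show ?thesis using dk_triv_nat[of m] assms by (simp add: int_pow_int)
next
  case (neg m)
  then have e: "d [^]\<^bsub>EE G\<^esub> k = einv (d [^]\<^bsub>EE G\<^esub> Suc m)" by (simp add: E.int_pow_neg_int del: of_nat_Suc)
  have "einv (einv (d [^]\<^bsub>EE G\<^esub> Suc m)) \<in> Ahat" using Ahat_inv[OF assms] unfolding e .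
  then have 1: "d [^]\<^bsub>EE G\<^esub> Suc m \<in> Ahat" by (simp del: E.nat_pow_Suc)
  show ?thesis unfolding e dk_triv_nat[OF 1] by simp
qed

definition NN where "NN = range (\<lambda>k::int. d [^]\<^bsub>EE G\<^esub> k)"

lemma NN_sub: "subgroup NN (EE G)"
proof (rule E.subgroupI)
  show "NN \<subseteq> EC" unfolding NN_def by auto
  show "NN \<noteq> {}" unfolding NN_def by auto
next
  fix x assume "x \<in> NN"
  then obtain i where "x = d [^]\<^bsub>EE G\<^esub> (i::int)" unfolding NN_def by auto
  then show "einv x \<in> NN" unfolding NN_def
    by (auto simp: E.int_pow_neg[symmetric])
next
  fix x y assume "x \<in> NN" "y \<in> NN"
  then obtain i j where "x = d [^]\<^bsub>EE G\<^esub> (i::int)" "y = d [^]\<^bsub>EE G\<^esub> (j::int)" unfolding NN_def by auto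
  then show "x \<odot> y \<in> NN" unfolding NN_def
    by (auto simp: E.int_pow_mult[symmetric])
qed

lemma conj_d_pow: assumes x: "x \<in> EC" and e: "x \<odot> d \<odot> einv x = d [^]\<^bsub>EE G\<^esub> (e::int)"
  shows "x \<odot> d [^]\<^bsub>EE G\<^esub> (m::int) \<odot> einv x = d [^]\<^bsub>EE G\<^esub> (e * m)"
  using E.conj_ipow[OF x d_C, of m] e by (simp add: E.int_pow_pow)

definition PP where "PP x \<longleftrightarrow> (\<exists>e::int. x \<odot> d \<odot> einv x = d [^]\<^bsub>EE G\<^esub> e)"

lemma PP_mult: assumes "x \<in> EC" "y \<in> EC" "PP x" "PP y" shows "PP (x \<odot> y)"
proof -
  obtain e1 e2 :: int where e: "x \<odot> d \<odot> einv x = d [^]\<^bsub>EE G\<^esub> e1" "y \<odot> d \<odot> einv y = d [^]\<^bsub>EE G\<^esub> e2"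
    using assms(3,4) unfolding PP_def by blast
  have "x \<odot> y \<odot> d \<odot> einv (x \<odot> y) = x \<odot> (y \<odot> d \<odot> einv y) \<odot> einv x"
    using assms(1,2) by (simp add: E.m_assoc E.inv_mult_group)
  also have "\<dots> = d [^]\<^bsub>EE G\<^esub> (e1 * e2)" unfolding e(2) by (rule conj_d_pow[OF assms(1) e(1)])
  finally show ?thesis unfolding PP_def by blast
qed

lemma PP_npow: assumes "x \<in> EC" "PP x" shows "PP (x [^]\<^bsub>EE G\<^esub> (n::nat))"
proof (induction n)
  case 0 then show ?case unfolding PP_def by (intro exI[of _ 1]) simp
next
  case (Suc n) then show ?case using PP_mult[of "x [^]\<^bsub>EE G\<^esub> n" x] assms by (simp add: E.nat_pow_Suc)
qed

lemma PP_Ahat: "x \<in> Ahat \<Longrightarrow> PP x"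
  unfolding PP_def using Ahat_central[of x d] Ahat_sub[of x]
  by (intro exI[of _ 1]) (simp add: E.m_assoc)

lemma PP_ah: "PP ah"
  unfolding PP_def d_comm_ah
  by (intro exI[of _ 1]) (simp add: E.m_assoc)

lemma cm_central_left: assumes "\<alpha> \<in> Ahat" "u \<in> EC" "y \<in> EC" shows "E.cm (\<alpha> \<odot> u) y = E.cm u y"
proof -
  have aC': "\<alpha> \<in> EC" using Ahat_sub assms(1) by blast
  have "E.cm \<alpha> y = \<one>\<^bsub>EE G\<^esub>" using E.cm_one_iff[OF aC' assms(3)] Ahat_central[OF assms(1,3)] by simp
  then have "E.cm (\<alpha> \<odot> u) y = \<alpha> \<odot> E.cm u y \<odot> einv \<alpha>"
    using E.cm_mult[OF aC' assms(2,3)] aC' assms by (simp add: E.cm_closed)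
  also have "\<dots> = E.cm u y"
    using Ahat_central[OF assms(1), of "E.cm u y"] aC' assms by (simp add: E.cm_closed E.m_assoc)
  finally show ?thesis .
qed

lemma PP_bh: "PP bh"
proof -
  obtain \<alpha> where \<alpha>: "\<alpha> \<in> Ahat" "bh \<odot> ah \<odot> einv bh = \<alpha> \<odot> ah [^]\<^bsub>EE G\<^esub> r" using alpha0 by blast
  have "bh \<odot> d \<odot> einv bh = E.cm (bh \<odot> ah \<odot> einv bh) bh" unfolding d_def by (rule E.cm_conj) simp_all
  also have "\<dots> = E.cm (ah [^]\<^bsub>EE G\<^esub> r) bh" unfolding \<alpha>(2) by (rule cm_central_left[OF \<alpha>(1)]) simp_all
  also have "\<dots> = d [^]\<^bsub>EE G\<^esub> (int r)" by (simp add: cm_pow int_pow_int)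
  finally show ?thesis unfolding PP_def by blast
qed

lemma PP_all: assumes "x \<in> EC" shows "PP x"
proof -
  obtain \<beta> i j where bij: "\<beta> \<in> Ahat" "x = \<beta> \<odot> (ah [^]\<^bsub>EE G\<^esub> (i::nat) \<odot> bh [^]\<^bsub>EE G\<^esub> (j::nat))"
    using dec_E[OF assms] by blast
  have 1: "PP (ah [^]\<^bsub>EE G\<^esub> i \<odot> bh [^]\<^bsub>EE G\<^esub> j)"
    by (rule PP_mult) (simp_all add: PP_npow PP_ah PP_bh)
  have 2: "PP \<beta>" by (rule PP_Ahat[OF bij(1)])
  show ?thesis unfolding bij(2)
    by (rule PP_mult[OF Ahat_sub[OF bij(1)] _ 2 1]) simp
qed

lemma NN_normal: "NN \<lhd> EE G"
  unfolding E.normal_inv_iff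
proof (intro conjI ballI NN_sub)
  fix x h assume x: "x \<in> EC" and h: "h \<in> NN"
  obtain m::int where m: "h = d [^]\<^bsub>EE G\<^esub> m" using h unfolding NN_def by auto
  obtain e where "x \<odot> d \<odot> einv x = d [^]\<^bsub>EE G\<^esub> (e::int)" using PP_all[OF x] unfolding PP_def by blast
  then show "x \<odot> h \<odot> einv x \<in> NN" unfolding m NN_def using conj_d_pow[OF x] by blast
qed

lemma NN_Ahat: "x \<in> NN \<Longrightarrow> x \<in> Ahat \<Longrightarrow> x = \<one>\<^bsub>EE G\<^esub>"
  unfolding NN_def using dk_triv by auto

end

context mcg
begin

sublocale NQ: normal NN "EE G" by (rule NN_normal)

abbreviation QQ where "QQ \<equiv> EE G Mod NN"

sublocale Q: group QQ by (rule NQ.factorgroup_is_group)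

declare mult_FactGroup [simp del] one_FactGroup [simp del]

definition rho where "rho x = NN #>\<^bsub>EE G\<^esub> x"

lemma rho_hom: "rho \<in> hom (EE G) QQ"
  unfolding rho_def using NQ.r_coset_hom_Mod .

lemma rho_C: "x \<in> EC \<Longrightarrow> rho x \<in> carrier QQ"
  using rho_hom unfolding hom_def by auto

lemma rho_mult: "x \<in> EC \<Longrightarrow> y \<in> EC \<Longrightarrow> rho (x \<odot> y) = rho x \<otimes>\<^bsub>QQ\<^esub> rho y"
  using rho_hom unfolding hom_def by auto

lemma rho_npow: "x \<in> EC \<Longrightarrow> rho (x [^]\<^bsub>EE G\<^esub> (n::nat)) = rho x [^]\<^bsub>QQ\<^esub> n"
  using hom_nat_pow[OF rho_hom _ E.is_group Q.is_group] by blast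

lemma rho_d: "rho d = \<one>\<^bsub>QQ\<^esub>"
proof -
  have "d \<in> NN" unfolding NN_def by (rule range_eqI[of _ _ 1]) simp
  then show ?thesis unfolding rho_def one_FactGroup using subgroup.rcos_const[OF NN_sub E.is_group] by simp
qed

lemma rho_one_imp: "x \<in> EC \<Longrightarrow> rho x = \<one>\<^bsub>QQ\<^esub> \<Longrightarrow> x \<in> NN"
  unfolding rho_def one_FactGroup using E.rcos_self[OF _ NN_sub] by metis

lemma C1: "\<beta> \<in> Ahat \<Longrightarrow> x \<in> EC \<Longrightarrow> rho \<beta> \<otimes>\<^bsub>QQ\<^esub> rho x = rho x \<otimes>\<^bsub>QQ\<^esub> rho \<beta>"
  using rho_mult Ahat_central Ahat_sub by metis

lemma C2: "rho ah \<otimes>\<^bsub>QQ\<^esub> rho bh = rho bh \<otimes>\<^bsub>QQ\<^esub> rho ah"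
proof -
  have "ah \<odot> bh = d \<odot> (bh \<odot> ah)" unfolding d_def E.cm_def by (simp add: E.m_assoc)
  then have "rho (ah \<odot> bh) = rho d \<otimes>\<^bsub>QQ\<^esub> rho (bh \<odot> ah)"
    by (simp only:) (rule rho_mult; simp)
  also have "\<dots> = rho (bh \<odot> ah)" unfolding rho_d by (rule Q.l_one[OF rho_C]) simp
  finally have "rho (ah \<odot> bh) = rho (bh \<odot> ah)" .
  then show ?thesis using rho_mult[of ah bh] rho_mult[of bh ah] by simp
qed

lemma rho_dec: assumes "x \<in> EC" obtains \<beta> i j where "\<beta> \<in> Ahat"
  "rho x = rho \<beta> \<otimes>\<^bsub>QQ\<^esub> (rho ah [^]\<^bsub>QQ\<^esub> (i::nat) \<otimes>\<^bsub>QQ\<^esub> rho bh [^]\<^bsub>QQ\<^esub> (j::nat))"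
proof -
  obtain \<beta> i j where bij: "\<beta> \<in> Ahat" "x = \<beta> \<odot> (ah [^]\<^bsub>EE G\<^esub> (i::nat) \<odot> bh [^]\<^bsub>EE G\<^esub> (j::nat))"
    using dec_E[OF assms] by blast
  have "rho x = rho \<beta> \<otimes>\<^bsub>QQ\<^esub> (rho ah [^]\<^bsub>QQ\<^esub> i \<otimes>\<^bsub>QQ\<^esub> rho bh [^]\<^bsub>QQ\<^esub> j)"
    unfolding bij(2) using Ahat_sub[OF bij(1)] by (simp add: rho_mult rho_npow)
  then show ?thesis using that bij(1) by blast
qed

lemma C3: assumes "x \<in> EC" shows "rho ah \<otimes>\<^bsub>QQ\<^esub> rho x = rho x \<otimes>\<^bsub>QQ\<^esub> rho ah"
proof -
  obtain \<beta> i j where bij: "\<beta> \<in> Ahat"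
    "rho x = rho \<beta> \<otimes>\<^bsub>QQ\<^esub> (rho ah [^]\<^bsub>QQ\<^esub> (i::nat) \<otimes>\<^bsub>QQ\<^esub> rho bh [^]\<^bsub>QQ\<^esub> (j::nat))"
    using rho_dec[OF assms] by blast
  have bC: "rho \<beta> \<in> carrier QQ" using rho_C Ahat_sub bij(1) by blast
  have 1: "rho ah \<otimes>\<^bsub>QQ\<^esub> rho \<beta> = rho \<beta> \<otimes>\<^bsub>QQ\<^esub> rho ah" using C1[OF bij(1) ah_C] by simp
  have 2: "rho ah \<otimes>\<^bsub>QQ\<^esub> rho ah [^]\<^bsub>QQ\<^esub> i = rho ah [^]\<^bsub>QQ\<^esub> i \<otimes>\<^bsub>QQ\<^esub> rho ah"
    by (rule Q.comm_npow) (simp_all add: rho_C)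
  have 3: "rho ah \<otimes>\<^bsub>QQ\<^esub> rho bh [^]\<^bsub>QQ\<^esub> j = rho bh [^]\<^bsub>QQ\<^esub> j \<otimes>\<^bsub>QQ\<^esub> rho ah"
    by (rule Q.comm_npow) (simp_all add: rho_C C2)
  have 4: "rho ah \<otimes>\<^bsub>QQ\<^esub> (rho ah [^]\<^bsub>QQ\<^esub> i \<otimes>\<^bsub>QQ\<^esub> rho bh [^]\<^bsub>QQ\<^esub> j) = (rho ah [^]\<^bsub>QQ\<^esub> i \<otimes>\<^bsub>QQ\<^esub> rho bh [^]\<^bsub>QQ\<^esub> j) \<otimes>\<^bsub>QQ\<^esub> rho ah"
    by (rule Q.comm_mult) (simp_all add: rho_C 2 3)
  show ?thesis unfolding bij(2) by (rule Q.comm_mult) (simp_all add: rho_C bC 1 4)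
qed

lemma C4: assumes "x \<in> EC" shows "rho bh \<otimes>\<^bsub>QQ\<^esub> rho x = rho x \<otimes>\<^bsub>QQ\<^esub> rho bh"
proof -
  obtain \<beta> i j where bij: "\<beta> \<in> Ahat"
    "rho x = rho \<beta> \<otimes>\<^bsub>QQ\<^esub> (rho ah [^]\<^bsub>QQ\<^esub> (i::nat) \<otimes>\<^bsub>QQ\<^esub> rho bh [^]\<^bsub>QQ\<^esub> (j::nat))"
    using rho_dec[OF assms] by blast
  have bC: "rho \<beta> \<in> carrier QQ" using rho_C Ahat_sub bij(1) by blast
  have 1: "rho bh \<otimes>\<^bsub>QQ\<^esub> rho \<beta> = rho \<beta> \<otimes>\<^bsub>QQ\<^esub> rho bh" using C1[OF bij(1) bh_C] by simp
  have 2: "rho bh \<otimes>\<^bsub>QQ\<^esub> rho ah [^]\<^bsub>QQ\<^esub> i = rho ah [^]\<^bsub>QQ\<^esub> i \<otimes>\<^bsub>QQ\<^esub> rho bh"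
    by (rule Q.comm_npow) (simp_all add: rho_C C2)
  have 3: "rho bh \<otimes>\<^bsub>QQ\<^esub> rho bh [^]\<^bsub>QQ\<^esub> j = rho bh [^]\<^bsub>QQ\<^esub> j \<otimes>\<^bsub>QQ\<^esub> rho bh"
    by (rule Q.comm_npow) (simp_all add: rho_C)
  have 4: "rho bh \<otimes>\<^bsub>QQ\<^esub> (rho ah [^]\<^bsub>QQ\<^esub> i \<otimes>\<^bsub>QQ\<^esub> rho bh [^]\<^bsub>QQ\<^esub> j) = (rho ah [^]\<^bsub>QQ\<^esub> i \<otimes>\<^bsub>QQ\<^esub> rho bh [^]\<^bsub>QQ\<^esub> j) \<otimes>\<^bsub>QQ\<^esub> rho bh"
    by (rule Q.comm_mult) (simp_all add: rho_C 2 3)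
  show ?thesis unfolding bij(2) by (rule Q.comm_mult) (simp_all add: rho_C bC 1 4)
qed

lemma C5: assumes x: "x \<in> EC" and y: "y \<in> EC" shows "rho x \<otimes>\<^bsub>QQ\<^esub> rho y = rho y \<otimes>\<^bsub>QQ\<^esub> rho x"
proof -
  obtain \<beta> i j where bij: "\<beta> \<in> Ahat"
    "rho y = rho \<beta> \<otimes>\<^bsub>QQ\<^esub> (rho ah [^]\<^bsub>QQ\<^esub> (i::nat) \<otimes>\<^bsub>QQ\<^esub> rho bh [^]\<^bsub>QQ\<^esub> (j::nat))"
    using rho_dec[OF y] by blast
  have bC: "rho \<beta> \<in> carrier QQ" using rho_C Ahat_sub bij(1) by blast
  have xC: "rho x \<in> carrier QQ" using rho_C x by blast
  have 1: "rho x \<otimes>\<^bsub>QQ\<^esub> rho \<beta> = rho \<beta> \<otimes>\<^bsub>QQ\<^esub> rho x" using C1[OF bij(1) x] by simp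
  have 2: "rho x \<otimes>\<^bsub>QQ\<^esub> rho ah [^]\<^bsub>QQ\<^esub> i = rho ah [^]\<^bsub>QQ\<^esub> i \<otimes>\<^bsub>QQ\<^esub> rho x"
    by (rule Q.comm_npow) (simp_all add: rho_C xC C3[OF x])
  have 3: "rho x \<otimes>\<^bsub>QQ\<^esub> rho bh [^]\<^bsub>QQ\<^esub> j = rho bh [^]\<^bsub>QQ\<^esub> j \<otimes>\<^bsub>QQ\<^esub> rho x"
    by (rule Q.comm_npow) (simp_all add: rho_C xC C4[OF x])
  have 4: "rho x \<otimes>\<^bsub>QQ\<^esub> (rho ah [^]\<^bsub>QQ\<^esub> i \<otimes>\<^bsub>QQ\<^esub> rho bh [^]\<^bsub>QQ\<^esub> j) = (rho ah [^]\<^bsub>QQ\<^esub> i \<otimes>\<^bsub>QQ\<^esub> rho bh [^]\<^bsub>QQ\<^esub> j) \<otimes>\<^bsub>QQ\<^esub> rho x"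
    by (rule Q.comm_mult) (simp_all add: rho_C xC 2 3)
  show ?thesis unfolding bij(2) by (rule Q.comm_mult) (simp_all add: rho_C xC bC 1 4)
qed

lemma Q_comm: "comm_group QQ"
proof (rule Q.group_comm_groupI)
  fix u v assume "u \<in> carrier QQ" "v \<in> carrier QQ"
  then obtain x y where "x \<in> EC" "y \<in> EC" "u = rho x" "v = rho y"
    unfolding carrier_FactGroup rho_def by auto
  then show "u \<otimes>\<^bsub>QQ\<^esub> v = v \<otimes>\<^bsub>QQ\<^esub> u" using C5 by simp
qed

lemma rho_Ahat_inj: "\<beta> \<in> Ahat \<Longrightarrow> rho \<beta> = \<one>\<^bsub>QQ\<^esub> \<Longrightarrow> \<beta> = \<one>\<^bsub>EE G\<^esub>"
  using rho_one_imp Ahat_sub NN_Ahat by blast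

end

context group
begin

lemma additive_smul:
  assumes add: "\<And>x y. F (\<lambda>q. x q + y q) = F x \<otimes> F y" and cl: "\<And>x. F x \<in> carrier G"
  shows "F (\<lambda>q. of_int k * x q) = F x [^] (k::int)"
proof -
  have z: "F (\<lambda>q. 0) = \<one>"
  proof -
    have "F (\<lambda>q. 0) = F (\<lambda>q. 0) \<otimes> F (\<lambda>q. 0)" using add[of "\<lambda>q. 0" "\<lambda>q. 0"] by simp
    then show ?thesis using cl by (metis l_one r_cancel one_closed)
  qed
  have n: "F (\<lambda>q. of_nat n * x q) = F x [^] n" for n :: nat
  proof (induction n)
    case 0 then show ?case using z by simp
  next
    case (Suc n)
    have "F (\<lambda>q. of_nat (Suc n) * x q) = F (\<lambda>q. of_nat n * x q + x q)" by (simp add: algebra_simps)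
    also have "\<dots> = F x [^] n \<otimes> F x" using add Suc by simp
    finally show ?case by (simp add: nat_pow_Suc)
  qed
  show ?thesis
  proof (cases k rule: int_cases)
    case (nonneg m) then show ?thesis using n[of m] by (simp add: int_pow_int)
  next
    case (neg m)
    have s0: "(\<lambda>q. of_int k * x q + of_nat (Suc m) * x q) = (\<lambda>q. 0)"
      using neg by (simp add: algebra_simps del: of_nat_Suc)
    have "F (\<lambda>q. of_int k * x q) \<otimes> F (\<lambda>q. of_nat (Suc m) * x q) = F (\<lambda>q. 0)"
      using add[of "\<lambda>q. of_int k * x q" "\<lambda>q. of_nat (Suc m) * x q"] unfolding s0 by simp
    then have "F (\<lambda>q. of_int k * x q) = inv (F (\<lambda>q. of_nat (Suc m) * x q))"
      using z cl by (metis inv_equality)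
    then show ?thesis using n[of "Suc m"] neg by (simp add: int_pow_neg_int[OF cl] del: of_nat_Suc nat_pow_Suc)
  qed
qed

end

lemma bd2_add: "bd2 G (\<lambda>p. c1 p + c2 p) = (\<lambda>x. bd2 G c1 x + bd2 G c2 x)"
  unfolding bd2_def by (simp add: distrib_right sum.distrib)

lemma bd2_ind:
  assumes "g \<in> carrier G" "h \<in> carrier G" "finite (carrier G)"
  shows "bd2 G (ind (g,h)) = (\<lambda>x. ((if h = x then 1 else 0) - (if g \<otimes>\<^bsub>G\<^esub> h = x then 1 else 0) + (if g = x then 1 else 0)))"
proof
  fix x
  have fin2: "finite (carrier G \<times> carrier G)" using assms(3) by simp
  have mem: "(g,h) \<in> carrier G \<times> carrier G" using assms by blast
  have "bd2 G (ind (g,h)) x = (\<Sum>p \<in> carrier G \<times> carrier G. if p = (g,h) then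
       ((if h = x then 1 else 0) - (if g \<otimes>\<^bsub>G\<^esub> h = x then 1 else 0) + (if g = x then 1 else 0)) else 0)"
    unfolding bd2_def by (rule sum.cong) (auto simp: ind_def)
  also have "\<dots> = ((if h = x then 1 else 0) - (if g \<otimes>\<^bsub>G\<^esub> h = x then 1 else 0) + (if g = x then 1 else 0))"
    by (subst sum.delta[OF fin2]) (simp only: mem if_True)
  finally show "bd2 G (ind (g,h)) x = ((if h = x then 1 else 0) - (if g \<otimes>\<^bsub>G\<^esub> h = x then 1 else 0) + (if g = x then 1 else 0))" .
qed

context mcg
begin

sublocale QC: comm_group QQ by (rule Q_comm)

definition sl where "sl x = (cls G (\<lambda>q. 0), x)"
definition uu where "uu x = rho (sl x)"

lemma sl_C: "x \<in> carrier G \<Longrightarrow> sl x \<in> EC" unfolding sl_def by (simp add: EE_carrier)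
lemma uu_C: "x \<in> carrier G \<Longrightarrow> uu x \<in> carrier QQ" unfolding uu_def using sl_C rho_C by blast

definition Lam where "Lam w = rho (cls G (\<lambda>q. w q - ind (\<one>,\<one>) q), \<one>)"

lemma Lam_Ahat: "(cls G (\<lambda>q. w q - ind (\<one>,\<one>) q), \<one>) \<in> Ahat"
  unfolding Ahat_def by (simp add: EE_carrier)

lemma Lam_C: "Lam w \<in> carrier QQ"
  unfolding Lam_def using rho_C Lam_Ahat Ahat_sub by blast

lemma Lam_add: "Lam (\<lambda>q. w1 q + w2 q) = Lam w1 \<otimes>\<^bsub>QQ\<^esub> Lam w2"
proof -
  have "(cls G (\<lambda>q. w1 q - ind (\<one>,\<one>) q), \<one>) \<odot> (cls G (\<lambda>q. w2 q - ind (\<one>,\<one>) q), \<one>)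
      = (cls G (\<lambda>q. (w1 q + w2 q) - ind (\<one>,\<one>) q), \<one>)"
    unfolding EE_mult by (simp add: algebra_simps)
  then show ?thesis unfolding Lam_def
    using rho_mult[OF Ahat_sub[OF Lam_Ahat[of w1]] Ahat_sub[OF Lam_Ahat[of w2]]] by (simp only:)
qed

lemma Lam_smul: "Lam (\<lambda>q. of_int k * w q) = Lam w [^]\<^bsub>QQ\<^esub> k"
  by (rule Q.additive_smul[OF Lam_add Lam_C])

lemma Lam_ind: assumes g: "g \<in> carrier G" and h: "h \<in> carrier G"
  shows "Lam (ind (g,h)) = uu g \<otimes>\<^bsub>QQ\<^esub> uu h \<otimes>\<^bsub>QQ\<^esub> inv\<^bsub>QQ\<^esub> uu (g \<otimes> h)"
proof -
  have "(\<lambda>q. (ind (g, h) q - ind (\<one>, \<one>) q + 0 + ind (\<one>, g \<otimes> h) q) - (0 + 0 + ind (g, h) q)) \<in> WW G"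
    by (rule WW_eqI[OF one_left[of "g \<otimes> h"]]) (simp_all add: g h)
  then have "cls G (\<lambda>q. ind (g, h) q - ind (\<one>, \<one>) q + 0 + ind (\<one>, g \<otimes> h) q) = cls G (\<lambda>q. 0 + 0 + ind (g, h) q)"
    by (rule cls_eqI)
  then have e: "(cls G (\<lambda>q. ind (g,h) q - ind (\<one>,\<one>) q), \<one>) \<odot> sl (g \<otimes> h) = sl g \<odot> sl h"
    unfolding sl_def EE_mult using g h by simp
  have XC: "(cls G (\<lambda>q. ind (g,h) q - ind (\<one>,\<one>) q), \<one>) \<in> EC" by (rule Ahat_sub[OF Lam_Ahat])
  have "Lam (ind (g,h)) \<otimes>\<^bsub>QQ\<^esub> uu (g \<otimes> h) = rho ((cls G (\<lambda>q. ind (g,h) q - ind (\<one>,\<one>) q), \<one>) \<odot> sl (g \<otimes> h))"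
    unfolding Lam_def uu_def by (rule rho_mult[symmetric, OF XC sl_C]) (simp add: g h)
  also have "\<dots> = uu g \<otimes>\<^bsub>QQ\<^esub> uu h" unfolding e uu_def by (rule rho_mult[OF sl_C[OF g] sl_C[OF h]])
  finally have 1: "Lam (ind (g,h)) \<otimes>\<^bsub>QQ\<^esub> uu (g \<otimes> h) = uu g \<otimes>\<^bsub>QQ\<^esub> uu h" .
  have gh: "g \<otimes> h \<in> carrier G" using g h by simp
  show ?thesis
    by (subst Q.inv_solve_right) (simp_all add: Lam_C uu_C g h gh 1[symmetric])
qed

definition MM where "MM (v :: 'a \<Rightarrow> int) = finprod QQ (\<lambda>x. uu x [^]\<^bsub>QQ\<^esub> v x) (carrier G)"

lemma MM_C: "MM v \<in> carrier QQ" unfolding MM_def by (rule QC.finprod_closed) (simp add: uu_C)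

lemma MM_add: "MM (\<lambda>x. v1 x + v2 x) = MM v1 \<otimes>\<^bsub>QQ\<^esub> MM v2"
proof -
  have "MM (\<lambda>x. v1 x + v2 x) = finprod QQ (\<lambda>x. uu x [^]\<^bsub>QQ\<^esub> v1 x \<otimes>\<^bsub>QQ\<^esub> uu x [^]\<^bsub>QQ\<^esub> v2 x) (carrier G)"
    unfolding MM_def by (rule QC.finprod_cong') (simp_all add: uu_C Q.int_pow_mult)
  also have "\<dots> = MM v1 \<otimes>\<^bsub>QQ\<^esub> MM v2" unfolding MM_def by (rule QC.finprod_multf) (simp_all add: uu_C)
  finally show ?thesis .
qed

lemma MM_delta: "y \<in> carrier G \<Longrightarrow> MM (\<lambda>x. if y = x then 1 else 0) = uu y"
proof -
  assume y: "y \<in> carrier G"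
  have "MM (\<lambda>x. if y = x then 1 else 0) = finprod QQ (\<lambda>x. if y = x then uu x else \<one>\<^bsub>QQ\<^esub>) (carrier G)"
    unfolding MM_def by (rule QC.finprod_cong') (auto simp: uu_C)
  also have "\<dots> = uu y" by (rule QC.finprod_singleton[OF y fin]) (simp add: uu_C)
  finally show ?thesis .
qed

lemma MM_neg: "MM (\<lambda>x. - v x) = inv\<^bsub>QQ\<^esub> MM v"
proof -
  have "MM (\<lambda>x. - v x) \<otimes>\<^bsub>QQ\<^esub> MM v = MM (\<lambda>x. 0)" using MM_add[of "\<lambda>x. - v x" v] by simp
  also have "MM (\<lambda>x. 0) = \<one>\<^bsub>QQ\<^esub>" unfolding MM_def by (simp add: uu_C)
  finally show ?thesis using MM_C by (metis Q.inv_equality)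
qed

lemma MM_bd2_ind: assumes g: "g \<in> carrier G" and h: "h \<in> carrier G"
  shows "MM (bd2 G (ind (g,h))) = uu g \<otimes>\<^bsub>QQ\<^esub> uu h \<otimes>\<^bsub>QQ\<^esub> inv\<^bsub>QQ\<^esub> uu (g \<otimes> h)"
proof -
  have "MM (bd2 G (ind (g,h))) = MM (\<lambda>x. if h = x then 1 else 0) \<otimes>\<^bsub>QQ\<^esub> MM (\<lambda>x. - (if g \<otimes> h = x then 1 else 0))
      \<otimes>\<^bsub>QQ\<^esub> MM (\<lambda>x. if g = x then 1 else 0)"
    unfolding bd2_ind[OF g h fin] MM_add[symmetric] by simp
  also have "\<dots> = uu h \<otimes>\<^bsub>QQ\<^esub> inv\<^bsub>QQ\<^esub> uu (g \<otimes> h) \<otimes>\<^bsub>QQ\<^esub> uu g"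
    using g h by (simp add: MM_neg MM_delta)
  also have "\<dots> = uu g \<otimes>\<^bsub>QQ\<^esub> uu h \<otimes>\<^bsub>QQ\<^esub> inv\<^bsub>QQ\<^esub> uu (g \<otimes> h)"
    using g h uu_C by (simp add: QC.m_ac)
  finally show ?thesis .
qed

lemma MMbd_add: "MM (bd2 G (\<lambda>p. c1 p + c2 p)) = MM (bd2 G c1) \<otimes>\<^bsub>QQ\<^esub> MM (bd2 G c2)"
  unfolding bd2_add by (rule MM_add)

lemma MMbd_smul: "MM (bd2 G (\<lambda>q. of_int k * w q)) = MM (bd2 G w) [^]\<^bsub>QQ\<^esub> k"
  by (rule Q.additive_smul[where F="\<lambda>w. MM (bd2 G w)", OF MMbd_add MM_C])

lemma Lam_MM: assumes "finite S" "S \<subseteq> carrier G \<times> carrier G"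
  shows "\<forall>w. (\<forall>q. w q \<noteq> 0 \<longrightarrow> q \<in> S) \<longrightarrow> Lam w = MM (bd2 G w)"
  using assms
proof (induction S rule: finite_induct)
  case empty
  show ?case
  proof (intro allI impI)
    fix w :: "'a \<times> 'a \<Rightarrow> int" assume "\<forall>q. w q \<noteq> 0 \<longrightarrow> q \<in> {}"
    then have w0: "w = (\<lambda>q. of_int 0 * ind (\<one>,\<one>) q)" by auto
    show "Lam w = MM (bd2 G w)" unfolding w0 Lam_smul MMbd_smul by simp
  qed
next
  case (insert p S)
  show ?case
  proof (intro allI impI)
    fix w :: "'a \<times> 'a \<Rightarrow> int" assume w: "\<forall>q. w q \<noteq> 0 \<longrightarrow> q \<in> insert p S"
    define w' where "w' = w(p := 0)"
    have w'S: "\<forall>q. w' q \<noteq> 0 \<longrightarrow> q \<in> S" using w unfolding w'_def by auto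
    have IH: "Lam w' = MM (bd2 G w')" using insert w'S by blast
    have weq: "w = (\<lambda>q. w' q + of_int (w p) * ind p q)" unfolding w'_def ind_def by auto
    obtain g h where p: "p = (g,h)" "g \<in> carrier G" "h \<in> carrier G" using insert(4) by auto
    have "Lam w = Lam w' \<otimes>\<^bsub>QQ\<^esub> Lam (ind p) [^]\<^bsub>QQ\<^esub> (w p)"
      by (subst weq, subst Lam_add, subst Lam_smul) rule
    also have "\<dots> = MM (bd2 G w') \<otimes>\<^bsub>QQ\<^esub> MM (bd2 G (ind p)) [^]\<^bsub>QQ\<^esub> (w p)"
      unfolding IH p(1) Lam_ind[OF p(2,3)] MM_bd2_ind[OF p(2,3)] ..
    also have "\<dots> = MM (bd2 G (\<lambda>q. w' q + of_int (w p) * ind p q))"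
      by (simp only: MMbd_add MMbd_smul)
    also have "\<dots> = MM (bd2 G w)" unfolding weq[symmetric] ..
    finally show "Lam w = MM (bd2 G w)" .
  qed
qed

lemma cycle_in_WW: assumes c: "c \<in> cycles2 G" shows "c \<in> WW G"
proof -
  have supp: "\<forall>q. c q \<noteq> 0 \<longrightarrow> q \<in> carrier G \<times> carrier G" using c unfolding cycles2_def chains2_def by blast
  have bd: "bd2 G c = (\<lambda>_. 0)" using c unfolding cycles2_def by blast
  have "Lam c = MM (\<lambda>_. 0)" using Lam_MM[of "carrier G \<times> carrier G"] fin supp bd by auto
  also have "\<dots> = \<one>\<^bsub>QQ\<^esub>" unfolding MM_def by (simp add: uu_C)
  finally have "(cls G (\<lambda>q. c q - ind (\<one>,\<one>) q), \<one>) = \<one>\<^bsub>EE G\<^esub>"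
    unfolding Lam_def by (rule rho_Ahat_inj[OF Lam_Ahat])
  then have "cls G (\<lambda>q. c q - ind (\<one>,\<one>) q) = cls G (\<lambda>q. - ind (\<one>,\<one>) q)" by (simp add: EE_one)
  then have "(\<lambda>q. (c q - ind (\<one>,\<one>) q) - (- ind (\<one>,\<one>) q)) \<in> WW G" by (simp add: cls_eq)
  then show ?thesis by simp
qed

end

theorem proposition3p1:
  fixes G :: "('a, 'b) monoid_scheme"
  assumes "group G" and "finite (carrier G)" and "metacyclic G"
  shows "ganea_epi G"
proof -
  interpret F: fgrp G using assms(1,2) by (simp add: fgrp_def fgrp_axioms_def)
  obtain a b and r :: nat where abr: "a \<in> carrier G" "b \<in> carrier G" "b \<otimes>\<^bsub>G\<^esub> a \<otimes>\<^bsub>G\<^esub> inv\<^bsub>G\<^esub> b = a [^]\<^bsub>G\<^esub> r"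
    "\<And>g. g \<in> carrier G \<Longrightarrow> \<exists>(i::nat) (j::nat). g = a [^]\<^bsub>G\<^esub> i \<otimes>\<^bsub>G\<^esub> b [^]\<^bsub>G\<^esub> j"
    using F.metacyclic_gens[OF assms(3)] by blast
  interpret M: mcg G a b r
    by (unfold_locales) (use abr in auto)
  have "c \<in> WW G" if "c \<in> cycles2 G" for c using M.cycle_in_WW[OF that] .
  then show ?thesis unfolding ganea_epi_def WW_def by blast
qed

end
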